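(* Assume (A1) and (A2) below. Then for any $(s,a)\in\mathcal S\times\mathcal A$ and policy $\pi$, the posterior variance of the $Q$-function $U_t^\pi(s,a)=\mathbb{V}_{p\sim\Phi_t}\big[Q^{\pi,p}(s,a)\big]$ satisfies $$U_t^\pi(s,a)=\gamma^2u_t(s,a)+\gamma^2\sum_{a',s'}\pi(a'\mid s')\bar p_t(s'\mid s,a)U_t^\pi(s',a'),$$ where $$u_t(s,a)=\mathbb{V}_{a',s'\sim\pi,\bar p_t}\big[\bar Q^\pi_t(s',a')\big]-\mathbb{E}_{p\sim\Phi_t}\Big[\mathbb{V}_{a',s'\sim\pi,p}\big[Q^{\pi,p}(s',a')\big]\Big].$$
   Context: Let $\mathcal S$ be a finite state space, $\mathcal A$ a finite action space, $r:\mathcal S\times\mathcal A\to\mathbb R$ a known bounded (deterministic) reward function and $\gamma\in[0,1)$ a discount factor. A transition function $p$ assigns to each $(s,a)$ a probability distribution $p(\cdot\mid s,a)$ on $\mathcal S$. A policy $\pi$ gives distributions $\pi(\cdot\mid s)$ on $\mathcal A$. For a transition function $p$, $Q^{\pi,p}(s,a)=\mathbb E\big[\sum_{h\ge 0}\gamma^h r(s_h,a_h)\mid s_0=s,a_0=a\big]$ with $s_{h+1}\sim p(\cdot\mid s_h,a_h)$ and $a_{h}\sim\pi(\cdot\mid s_{h})$ for $h\ge1$. The transition function $p$ is a random variable with distribution $\Phi_t$. Define $\bar p_t(s'\mid s,a)=\mathbb E_{p\sim\Phi_t}[p(s'\mid s,a)]$ and $\bar Q^\pi_t(s,a)=\mathbb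 E_{p\sim\Phi_t}[Q^{\pi,p}(s,a)]$. For a transition function $q$ and a function $f$ on $\mathcal S\times\mathcal A$, $\mathbb V_{a',s'\sim\pi,q}[f(s',a')]$ denotes the variance of $f(s',a')$ when $s'\sim q(\cdot\mid s,a)$ and $a'\sim\pi(\cdot\mid s')$. Assumptions: (A1) (independent transitions) $p(s'\mid x,a)$ and $p(s'\mid y,a)$ are independent random variables if $x\neq y$; (A2) (acyclic MDP) the MDP is a directed acyclic graph, i.e., states are not visited more than once in any given episode. *)

theory Defs
  imports "HOL-Probability.Probability"
begin

text \<open>Transition functions: p s a s' = p(s' | s,a). Policies: pol s a = pi(a | s).\<close>

definition is_transition :: "('s::finite \<Rightarrow> 'a::finite \<Rightarrow> 's \<Rightarrow> real) \<Rightarrow> bool" where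
  "is_transition p \<longleftrightarrow> (\<forall>s a s'. 0 \<le> p s a s') \<and> (\<forall>s a. (\<Sum>s'\<in>UNIV. p s a s') = 1)"

definition is_policy :: "('s::finite \<Rightarrow> 'a::finite \<Rightarrow> real) \<Rightarrow> bool" where
  "is_policy pol \<longleftrightarrow> (\<forall>s a. 0 \<le> pol s a) \<and> (\<forall>s. (\<Sum>a\<in>UNIV. pol s a) = 1)"

text \<open>Distribution of (s_h, a_h) given s_0 = s, a_0 = a (a_0 fixed, a_h ~ pi for h \<ge> 1).\<close>
fun sa_dist :: "('s::finite \<Rightarrow> 'a::finite \<Rightarrow> real) \<Rightarrow> ('s \<Rightarrow> 'a \<Rightarrow> 's \<Rightarrow> real)
                 \<Rightarrow> 's \<Rightarrow> 'a \<Rightarrow> nat \<Rightarrow> 's \<Rightarrow> 'a \<Rightarrow> real" where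
  "sa_dist pol p s a 0 x b = (if x = s \<and> b = a then 1 else 0)"
| "sa_dist pol p s a (Suc h) x b =
     (\<Sum>y\<in>UNIV. \<Sum>c\<in>UNIV. sa_dist pol p s a h y c * p y c x) * pol x b"

definition Qfun :: "('s::finite \<Rightarrow> 'a::finite \<Rightarrow> real) \<Rightarrow> real \<Rightarrow> ('s \<Rightarrow> 'a \<Rightarrow> real)
                    \<Rightarrow> ('s \<Rightarrow> 'a \<Rightarrow> 's \<Rightarrow> real) \<Rightarrow> 's \<Rightarrow> 'a \<Rightarrow> real" where
  "Qfun r \<gamma> pol p s a =
     (\<Sum>h. \<gamma> ^ h * (\<Sum>x\<in>UNIV. \<Sum>b\<in>UNIV. sa_dist pol p s a h x b * r x b))"

definition Vstep :: "('s::finite \<Rightarrow> 'a::finite \<Rightarrow> real) \<Rightarrow> ('s \<Rightarrow> 'a \<Rightarrow> 's \<Rightarrow> real)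
                     \<Rightarrow> ('s \<Rightarrow> 'a \<Rightarrow> real) \<Rightarrow> 's \<Rightarrow> 'a \<Rightarrow> real" where
  "Vstep pol q f s a =
     (let m = (\<Sum>s'\<in>UNIV. \<Sum>a'\<in>UNIV. q s a s' * pol s' a' * f s' a')
      in (\<Sum>s'\<in>UNIV. \<Sum>a'\<in>UNIV. q s a s' * pol s' a' * (f s' a' - m)\<^sup>2))"

definition pmean :: "'w measure \<Rightarrow> ('w \<Rightarrow> real) \<Rightarrow> real" where
  "pmean M X = (\<integral>\<omega>. X \<omega> \<partial>M)"

definition pvar :: "'w measure \<Rightarrow> ('w \<Rightarrow> real) \<Rightarrow> real" where
  "pvar M X = (\<integral>\<omega>. (X \<omega> - pmean M X)\<^sup>2 \<partial>M)"

end

theory Submission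
  imports Defs
begin

lemma sum2_delta:
  "(\<Sum>y\<in>(UNIV::'s::finite set). \<Sum>c\<in>(UNIV::'a::finite set). if y = s \<and> c = a then f y c else 0) = f s a"
proof -
  have "\<And>y. (\<Sum>c\<in>(UNIV::'a set). if y = s \<and> c = a then f y c else 0) = (if y = s then f y a else 0)"
    by (cases "y = s") (auto simp: sum.delta')
  then show ?thesis by (simp add: sum.delta')
qed

lemma sum2_delta':
  "(\<Sum>y\<in>(UNIV::'s::finite set). \<Sum>c\<in>(UNIV::'a::finite set). if s = y \<and> a = c then f y c else 0) = f s a"
proof -
  have "\<And>y. (\<Sum>c\<in>(UNIV::'a set). if s = y \<and> a = c then f y c else 0) = (if s = y then f y a else 0)"
    by (cases "y = s") (auto simp: sum.delta)
  then show ?thesis by (simp add: sum.delta)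
qed

lemma swap4:
  "(\<Sum>y\<in>A. \<Sum>c\<in>B. \<Sum>x\<in>C. \<Sum>b\<in>D. f y c x b) = (\<Sum>x\<in>C. \<Sum>b\<in>D. \<Sum>y\<in>A. \<Sum>c\<in>B. f y c x b)"
proof -
  have "(\<Sum>y\<in>A. \<Sum>c\<in>B. \<Sum>x\<in>C. \<Sum>b\<in>D. f y c x b) = (\<Sum>y\<in>A. \<Sum>x\<in>C. \<Sum>c\<in>B. \<Sum>b\<in>D. f y c x b)"
    by (rule sum.cong[OF refl], rule sum.swap)
  also have "\<dots> = (\<Sum>y\<in>A. \<Sum>x\<in>C. \<Sum>b\<in>D. \<Sum>c\<in>B. f y c x b)"
    by (rule sum.cong[OF refl], rule sum.cong[OF refl], rule sum.swap)
  also have "\<dots> = (\<Sum>x\<in>C. \<Sum>y\<in>A. \<Sum>b\<in>D. \<Sum>c\<in>B. f y c x b)"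
    by (rule sum.swap)
  also have "\<dots> = (\<Sum>x\<in>C. \<Sum>b\<in>D. \<Sum>y\<in>A. \<Sum>c\<in>B. f y c x b)"
    by (rule sum.cong[OF refl], rule sum.swap)
  finally show ?thesis .
qed

lemma sa_shift:
  "sa_dist pol p s a (Suc h) x b =
     (\<Sum>s'\<in>UNIV. \<Sum>a'\<in>UNIV. p s a s' * pol s' a' * sa_dist pol p s' a' h x b)"
proof (induction h arbitrary: x b)
  case 0
  have e1: "(\<Sum>y\<in>UNIV. \<Sum>c\<in>UNIV. (if y = s \<and> c = a then 1 else 0) * p y c x) = p s a x"
  proof -
    have "(\<Sum>y\<in>UNIV. \<Sum>c\<in>UNIV. (if y = s \<and> c = a then 1 else 0) * p y c x)
       = (\<Sum>y\<in>UNIV. \<Sum>c\<in>UNIV. if y = s \<and> c = a then p s a x else 0)"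
      by (intro sum.cong) auto
    then show ?thesis using sum2_delta[where f="\<lambda>_ _. p s a x"] by simp
  qed
  have e2: "(\<Sum>s'\<in>UNIV. \<Sum>a'\<in>UNIV. p s a s' * pol s' a' * (if x = s' \<and> b = a' then 1 else 0)) = p s a x * pol x b"
  proof -
    have "(\<Sum>s'\<in>UNIV. \<Sum>a'\<in>UNIV. p s a s' * pol s' a' * (if x = s' \<and> b = a' then 1 else 0))
       = (\<Sum>s'\<in>UNIV. \<Sum>a'\<in>UNIV. if x = s' \<and> b = a' then p s a s' * pol s' a' else 0)"
      by (intro sum.cong) auto
    then show ?thesis using sum2_delta'[where f="\<lambda>s' a'. p s a s' * pol s' a'"] by simp
  qed
  show ?case by (simp only: sa_dist.simps e1 e2)
next
  case (Suc h)
  have "sa_dist pol p s a (Suc (Suc h)) x b =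
     (\<Sum>y\<in>UNIV. \<Sum>c\<in>UNIV. (\<Sum>s'\<in>UNIV. \<Sum>a'\<in>UNIV. p s a s' * pol s' a' * sa_dist pol p s' a' h y c) * p y c x) * pol x b"
    by (subst sa_dist.simps(2)) (simp only: Suc.IH)
  also have "\<dots> = (\<Sum>y\<in>UNIV. \<Sum>c\<in>UNIV. \<Sum>s'\<in>UNIV. \<Sum>a'\<in>UNIV. p s a s' * pol s' a' * (sa_dist pol p s' a' h y c * p y c x * pol x b))"
    by (simp add: sum_distrib_left sum_distrib_right mult.assoc)
  also have "\<dots> = (\<Sum>s'\<in>UNIV. \<Sum>a'\<in>UNIV. \<Sum>y\<in>UNIV. \<Sum>c\<in>UNIV. p s a s' * pol s' a' * (sa_dist pol p s' a' h y c * p y c x * pol x b))"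
    by (rule swap4)
  also have "\<dots> = (\<Sum>s'\<in>UNIV. \<Sum>a'\<in>UNIV. p s a s' * pol s' a' * sa_dist pol p s' a' (Suc h) x b)"
    by (simp add: sum_distrib_left sum_distrib_right mult.assoc)
  finally show ?case .
qed

lemma sa_nonneg:
  assumes "is_transition p" "is_policy pol"
  shows "0 \<le> sa_dist pol p s a h x b"
  using assms by (induction h arbitrary: x b) (auto simp: is_transition_def is_policy_def intro!: sum_nonneg mult_nonneg_nonneg)

lemma sa_mass:
  assumes "is_transition p" "is_policy pol"
  shows "(\<Sum>x\<in>UNIV. \<Sum>b\<in>UNIV. sa_dist pol p s a h x b) = 1"
proof (induction h)
  case 0
  then show ?case using sum2_delta[where f="\<lambda>_ _. 1::real" and s=s and a=a] by simp
next
  case (Suc h)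
  have "(\<Sum>x\<in>UNIV. \<Sum>b\<in>UNIV. sa_dist pol p s a (Suc h) x b)
     = (\<Sum>x\<in>UNIV. \<Sum>b\<in>UNIV. \<Sum>y\<in>UNIV. \<Sum>c\<in>UNIV. sa_dist pol p s a h y c * (p y c x * pol x b))"
    by (simp add: sum_distrib_right mult.assoc)
  also have "\<dots> = (\<Sum>y\<in>UNIV. \<Sum>c\<in>UNIV. \<Sum>x\<in>UNIV. \<Sum>b\<in>UNIV. sa_dist pol p s a h y c * (p y c x * pol x b))"
    by (rule swap4)
  also have "\<dots> = (\<Sum>y\<in>UNIV. \<Sum>c\<in>UNIV. sa_dist pol p s a h y c * (\<Sum>x\<in>UNIV. p y c x * (\<Sum>b\<in>UNIV. pol x b)))"
    by (simp add: sum_distrib_left)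
  also have "\<dots> = (\<Sum>y\<in>UNIV. \<Sum>c\<in>UNIV. sa_dist pol p s a h y c)"
    using assms by (simp add: is_transition_def is_policy_def)
  finally show ?case using Suc by simp
qed

lemma sa_le1:
  assumes "is_transition p" "is_policy pol"
  shows "sa_dist pol p s a h x b \<le> 1"
proof -
  have "sa_dist pol p s a h x b \<le> (\<Sum>b\<in>UNIV. sa_dist pol p s a h x b)"
    by (rule member_le_sum) (auto intro: sa_nonneg[OF assms])
  also have "\<dots> \<le> (\<Sum>x\<in>UNIV. \<Sum>b\<in>UNIV. sa_dist pol p s a h x b)"
    by (rule member_le_sum[where f="\<lambda>x. \<Sum>b\<in>UNIV. sa_dist pol p s a h x b"]) (auto intro!: sum_nonneg sa_nonneg[OF assms])
  finally show ?thesis using sa_mass[OF assms] by simp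
qed

definition fterm where
  "fterm pol p r s a h = (\<Sum>x\<in>UNIV. \<Sum>b\<in>UNIV. sa_dist pol p s a h x b * r x b)"

lemma fterm_0: "fterm pol p r s a 0 = r s a"
proof -
  have "fterm pol p r s a 0 = (\<Sum>x\<in>UNIV. \<Sum>b\<in>UNIV. if s = x \<and> a = b then r x b else 0)"
    unfolding fterm_def by (intro sum.cong) auto
  then show ?thesis using sum2_delta'[where f=r] by simp
qed

lemma fterm_Suc: "fterm pol p r s a (Suc h) =
   (\<Sum>s'\<in>UNIV. \<Sum>a'\<in>UNIV. p s a s' * pol s' a' * fterm pol p r s' a' h)"
proof -
  have "fterm pol p r s a (Suc h) = (\<Sum>x\<in>UNIV. \<Sum>b\<in>UNIV. \<Sum>s'\<in>UNIV. \<Sum>a'\<in>UNIV. p s a s' * pol s' a' * (sa_dist pol p s' a' h x b * r x b))"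
    unfolding fterm_def sa_shift by (simp add: sum_distrib_right mult.assoc)
  also have "\<dots> = (\<Sum>s'\<in>UNIV. \<Sum>a'\<in>UNIV. \<Sum>x\<in>UNIV. \<Sum>b\<in>UNIV. p s a s' * pol s' a' * (sa_dist pol p s' a' h x b * r x b))"
    by (rule swap4)
  also have "\<dots> = (\<Sum>s'\<in>UNIV. \<Sum>a'\<in>UNIV. p s a s' * pol s' a' * fterm pol p r s' a' h)"
    unfolding fterm_def by (simp add: sum_distrib_left)
  finally show ?thesis .
qed

definition Rb :: "('s::finite \<Rightarrow> 'a::finite \<Rightarrow> real) \<Rightarrow> real" where
  "Rb r = (\<Sum>x\<in>UNIV. \<Sum>b\<in>UNIV. \<bar>r x b\<bar>)"

lemma fterm_bound:
  assumes "is_transition p" "is_policy pol"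
  shows "\<bar>fterm pol p r s a h\<bar> \<le> Rb r"
proof -
  have "\<bar>fterm pol p r s a h\<bar> \<le> (\<Sum>x\<in>UNIV. \<bar>\<Sum>b\<in>UNIV. sa_dist pol p s a h x b * r x b\<bar>)"
    unfolding fterm_def by (rule sum_abs)
  also have "\<dots> \<le> (\<Sum>x\<in>UNIV. \<Sum>b\<in>UNIV. \<bar>sa_dist pol p s a h x b * r x b\<bar>)"
    by (intro sum_mono sum_abs)
  also have "\<dots> \<le> Rb r"
    unfolding Rb_def
  proof (intro sum_mono)
    fix x b
    have "\<bar>sa_dist pol p s a h x b * r x b\<bar> = sa_dist pol p s a h x b * \<bar>r x b\<bar>"
      using sa_nonneg[OF assms] by (simp add: abs_mult)
    also have "\<dots> \<le> 1 * \<bar>r x b\<bar>"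
      by (intro mult_right_mono sa_le1[OF assms]) auto
    finally show "\<bar>sa_dist pol p s a h x b * r x b\<bar> \<le> \<bar>r x b\<bar>" by simp
  qed
  finally show ?thesis .
qed

lemma fterm_summable:
  assumes "is_transition p" "is_policy pol" "0 \<le> \<gamma>" "\<gamma> < 1"
  shows "summable (\<lambda>h. \<gamma> ^ h * fterm pol p r s a h)"
proof (rule summable_comparison_test)
  show "summable (\<lambda>h. \<gamma> ^ h * Rb r)"
    using assms by (intro summable_mult2 summable_geometric) auto
  show "\<exists>N. \<forall>n\<ge>N. norm (\<gamma> ^ n * fterm pol p r s a n) \<le> \<gamma> ^ n * Rb r"
    using fterm_bound[OF assms(1,2)] assms(3)
    by (auto simp: abs_mult intro!: mult_left_mono)
qed

lemma Qfun_eq: "Qfun r \<gamma> pol p s a = (\<Sum>h. \<gamma> ^ h * fterm pol p r s a h)"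
  unfolding Qfun_def fterm_def ..

lemma Qfun_bound:
  assumes "is_transition p" "is_policy pol" "0 \<le> \<gamma>" "\<gamma> < 1"
  shows "\<bar>Qfun r \<gamma> pol p s a\<bar> \<le> Rb r / (1 - \<gamma>)"
proof -
  have s1: "(\<lambda>h. \<gamma> ^ h * Rb r) sums (Rb r / (1 - \<gamma>))"
    using sums_mult2[OF geometric_sums[of \<gamma>], of "Rb r"] assms by auto
  have s2: "summable (\<lambda>h. \<gamma> ^ h * fterm pol p r s a h)" by (rule fterm_summable[OF assms])
  have b: "\<And>h. \<bar>\<gamma> ^ h * fterm pol p r s a h\<bar> \<le> \<gamma> ^ h * Rb r"
    using fterm_bound[OF assms(1,2)] assms(3) by (auto simp: abs_mult intro!: mult_left_mono)
  have g: "summable (\<lambda>h. \<gamma> ^ h * Rb r)" using s1 by (rule sums_summable)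
  have "(\<Sum>h. \<gamma> ^ h * fterm pol p r s a h) \<le> (\<Sum>h. \<gamma> ^ h * Rb r)"
    using b s2 g by (intro suminf_le) (auto simp: abs_le_iff)
  moreover have "(\<Sum>h. - (\<gamma> ^ h * Rb r)) \<le> (\<Sum>h. \<gamma> ^ h * fterm pol p r s a h)"
  proof (rule suminf_le)
    fix h show "- (\<gamma> ^ h * Rb r) \<le> \<gamma> ^ h * fterm pol p r s a h"
      using abs_le_D2[OF b[of h]] by linarith
  qed (use s2 g summable_minus in auto)
  moreover have "(\<Sum>h. - (\<gamma> ^ h * Rb r)) = - (\<Sum>h. \<gamma> ^ h * Rb r)"
    using g by (rule suminf_minus)
  ultimately show ?thesis unfolding Qfun_eq using sums_unique[OF s1] by auto
qed

lemma Bellman: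
  assumes "is_transition p" "is_policy pol" "0 \<le> \<gamma>" "\<gamma> < 1"
  shows "Qfun r \<gamma> pol p s a = r s a + \<gamma> * (\<Sum>s'\<in>UNIV. \<Sum>a'\<in>UNIV. p s a s' * pol s' a' * Qfun r \<gamma> pol p s' a')"
proof -
  let ?f = "\<lambda>s a h. \<gamma> ^ h * fterm pol p r s a h"
  have S: "\<And>s a. ?f s a sums Qfun r \<gamma> pol p s a"
    unfolding Qfun_eq by (rule summable_sums[OF fterm_summable[OF assms]])
  have T0: "(\<lambda>h. \<gamma> * (\<Sum>s'\<in>UNIV. \<Sum>a'\<in>UNIV. p s a s' * pol s' a' * ?f s' a' h)) sums
        (\<gamma> * (\<Sum>s'\<in>UNIV. \<Sum>a'\<in>UNIV. p s a s' * pol s' a' * Qfun r \<gamma> pol p s' a'))"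
    by (intro sums_mult sums_sum S)
  have E: "(\<lambda>h. \<gamma> * (\<Sum>s'\<in>UNIV. \<Sum>a'\<in>UNIV. p s a s' * pol s' a' * ?f s' a' h)) = (\<lambda>h. ?f s a (Suc h))"
    by (simp add: fterm_Suc sum_distrib_left mult.assoc mult.left_commute)
  have T: "(\<lambda>h. ?f s a (Suc h)) sums (\<gamma> * (\<Sum>s'\<in>UNIV. \<Sum>a'\<in>UNIV. p s a s' * pol s' a' * Qfun r \<gamma> pol p s' a'))"
    using T0 unfolding E .
  have "?f s a sums (\<gamma> * (\<Sum>s'\<in>UNIV. \<Sum>a'\<in>UNIV. p s a s' * pol s' a' * Qfun r \<gamma> pol p s' a') + ?f s a 0)"
    by (rule sums_Suc_iff[THEN iffD1, OF T])
  then show ?thesis using sums_unique2[OF S] by (simp add: fterm_0)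
qed


lemma sa_local:
  assumes agree: "\<And>y c x. y \<in> K \<Longrightarrow> p y c x = p' y c x"
    and closed: "\<And>y c x. y \<in> K \<Longrightarrow> p y c x \<noteq> 0 \<Longrightarrow> x \<in> K"
    and sK: "s \<in> K"
  shows "sa_dist pol p s a h x b = sa_dist pol p' s a h x b \<and> (x \<notin> K \<longrightarrow> sa_dist pol p s a h x b = 0)"
proof (induction h arbitrary: x b)
  case 0
  then show ?case using sK by auto
next
  case (Suc h)
  have e: "sa_dist pol p s a h y c * p y c x = sa_dist pol p' s a h y c * p' y c x" for y c
    using Suc.IH[of y c] agree[of y c x] by (cases "y \<in> K") auto
  have z: "x \<notin> K \<Longrightarrow> sa_dist pol p s a h y c * p y c x = 0" for y c
    using Suc.IH[of y c] closed[of y c x] by (cases "y \<in> K") auto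
  have S1: "(\<Sum>y\<in>UNIV. \<Sum>c\<in>UNIV. sa_dist pol p s a h y c * p y c x) = (\<Sum>y\<in>UNIV. \<Sum>c\<in>UNIV. sa_dist pol p' s a h y c * p' y c x)"
    using e by simp
  have S2: "x \<notin> K \<Longrightarrow> (\<Sum>y\<in>UNIV. \<Sum>c\<in>UNIV. sa_dist pol p s a h y c * p y c x) = 0"
    using z by (intro sum.neutral ballI) auto
  show ?case using S1 S2 by simp
qed

lemma Qfun_local:
  assumes agree: "\<And>y c x. y \<in> K \<Longrightarrow> p y c x = p' y c x"
    and closed: "\<And>y c x. y \<in> K \<Longrightarrow> p y c x \<noteq> 0 \<Longrightarrow> x \<in> K"
    and sK: "s \<in> K"
  shows "Qfun r \<gamma> pol p s a = Qfun r \<gamma> pol p' s a"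
proof -
  have "\<And>h x b. sa_dist pol p s a h x b = sa_dist pol p' s a h x b"
    using sa_local[of K p p' s pol a] agree closed sK by blast
  then show ?thesis unfolding Qfun_def by simp
qed

lemma sa_meas:
  assumes "\<And>x b y. (\<lambda>\<omega>. p \<omega> x b y) \<in> borel_measurable N"
  shows "(\<lambda>\<omega>. sa_dist pol (p \<omega>) s a h x b) \<in> borel_measurable N"
  by (induction h arbitrary: x b) (auto intro!: borel_measurable_sum borel_measurable_times assms)

lemma Q_meas:
  assumes "\<And>x b y. (\<lambda>\<omega>. p \<omega> x b y) \<in> borel_measurable N"
  shows "(\<lambda>\<omega>. Qfun r \<gamma> pol (p \<omega>) s a) \<in> borel_measurable N"
  unfolding Qfun_def
  by (intro borel_measurable_suminf borel_measurable_times borel_measurable_sum borel_measurable_const sa_meas assms)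

lemma eval_meas:
  assumes "y \<in> K"
  shows "(\<lambda>f. f y c x) \<in> borel_measurable (PiM K (\<lambda>_. (borel :: ('a \<Rightarrow> 's \<Rightarrow> real) measure)))"
proof -
  have c: "continuous_on UNIV (\<lambda>g :: 'a \<Rightarrow> 's \<Rightarrow> real. g c x)"
    by (rule continuous_on_compose2[OF continuous_on_product_coordinates continuous_on_product_coordinates]) auto
  have "(\<lambda>g :: 'a \<Rightarrow> 's \<Rightarrow> real. g c x) \<in> borel_measurable borel"
    using c by (rule borel_measurable_continuous_onI)
  moreover have "(\<lambda>f. f y) \<in> measurable (PiM K (\<lambda>_. (borel :: ('a \<Rightarrow> 's \<Rightarrow> real) measure))) borel"
    using measurable_component_singleton[OF assms] by blast
  ultimately show ?thesis using measurable_comp by (auto simp: comp_def)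
qed


lemma pvar_alt:
  assumes "prob_space M" "integrable M X" "integrable M (\<lambda>\<omega>. (X \<omega>)\<^sup>2)"
  shows "pvar M X = pmean M (\<lambda>\<omega>. (X \<omega>)\<^sup>2) - (pmean M X)\<^sup>2"
proof -
  interpret prob_space M by fact
  show ?thesis unfolding pvar_def pmean_def using variance_eq[OF assms(2,3)] by simp
qed

lemma pvar_affine:
  assumes "prob_space M" "integrable M X" "\<And>\<omega>. \<omega> \<in> space M \<Longrightarrow> Y \<omega> = c + d * X \<omega>"
  shows "pvar M Y = d\<^sup>2 * pvar M X"
proof -
  interpret prob_space M by fact
  have m: "pmean M Y = c + d * pmean M X"
  proof -
    have "pmean M Y = (\<integral>\<omega>. c + d * X \<omega> \<partial>M)"
      unfolding pmean_def using assms(3) by (intro Bochner_Integration.integral_cong) auto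
    also have "\<dots> = c + d * pmean M X"
      unfolding pmean_def using assms(2) by (simp add: prob_space)
    finally show ?thesis .
  qed
  have "pvar M Y = (\<integral>\<omega>. d\<^sup>2 * (X \<omega> - pmean M X)\<^sup>2 \<partial>M)"
    unfolding pvar_def m using assms(3) by (intro Bochner_Integration.integral_cong) (auto simp: power2_eq_square algebra_simps)
  also have "\<dots> = d\<^sup>2 * pvar M X"
    unfolding pvar_def by simp
  finally show ?thesis .
qed

lemma Vstep_alt:
  assumes "(\<Sum>s'\<in>UNIV. \<Sum>a'\<in>UNIV. q s a s' * pol s' a') = 1"
  shows "Vstep pol q f s a = (\<Sum>s'\<in>UNIV. \<Sum>a'\<in>UNIV. q s a s' * pol s' a' * (f s' a')\<^sup>2)
            - (\<Sum>s'\<in>UNIV. \<Sum>a'\<in>UNIV. q s a s' * pol s' a' * f s' a')\<^sup>2"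
proof -
  define m where "m = (\<Sum>s'\<in>UNIV. \<Sum>a'\<in>UNIV. q s a s' * pol s' a' * f s' a')"
  define w where "w s' a' = q s a s' * pol s' a'" for s' a'
  have "Vstep pol q f s a = (\<Sum>s'\<in>UNIV. \<Sum>a'\<in>UNIV. w s' a' * (f s' a')\<^sup>2 - 2 * m * (w s' a' * f s' a') + m\<^sup>2 * w s' a')"
    unfolding Vstep_def Let_def m_def[symmetric] w_def
    by (intro sum.cong refl) (simp add: power2_eq_square algebra_simps)
  also have "\<dots> = (\<Sum>s'\<in>UNIV. \<Sum>a'\<in>UNIV. w s' a' * (f s' a')\<^sup>2) - 2 * m * m + m\<^sup>2 * 1"
    using assms unfolding m_def w_def
    by (simp add: sum.distrib sum_subtractf sum_distrib_left[symmetric])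
  also have "\<dots> = (\<Sum>s'\<in>UNIV. \<Sum>a'\<in>UNIV. w s' a' * (f s' a')\<^sup>2) - m\<^sup>2"
    by (simp add: power2_eq_square)
  finally show ?thesis unfolding w_def m_def .
qed

definition extK :: "'s set \<Rightarrow> ('s \<Rightarrow> 'a \<Rightarrow> 's \<Rightarrow> real) \<Rightarrow> 's \<Rightarrow> 'a \<Rightarrow> 's \<Rightarrow> real" where
  "extK K f = (\<lambda>x. if x \<in> K then f x else (\<lambda>_ _. 0))"

lemma indep_case:
  fixes M :: "'w measure"
    and P :: "'w \<Rightarrow> ('s::finite \<Rightarrow> 'a::finite \<Rightarrow> 's \<Rightarrow> real)"
    and F :: "real \<Rightarrow> real"
  assumes posterior: "prob_space M"
    and trans: "\<forall>\<omega>\<in>space M. is_transition (P \<omega>)"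
    and A1: "prob_space.indep_vars M (\<lambda>_. borel) (\<lambda>x \<omega>. P \<omega> x) UNIV"
    and A2_graph: "\<forall>\<omega>\<in>space M. \<forall>x b y. 0 < P \<omega> x b y \<longrightarrow> (x, y) \<in> G"
    and A2_acyclic: "acyclic (G - Id)"
    and G: "(s, s') \<in> G" "s \<noteq> s'"
    and F: "F \<in> borel_measurable borel"
  obtains Z where "prob_space.indep_var M borel Z borel (\<lambda>\<omega>. P \<omega> s a s')"
     "\<And>\<omega>. \<omega> \<in> space M \<Longrightarrow> Z \<omega> = F (Qfun r \<gamma> pol (P \<omega>) s' a')"
proof -
  interpret prob_space M by fact
  define K where "K = {x. (s', x) \<in> G\<^sup>*}"
  have sK: "s \<notin> K"
  proof
    assume "s \<in> K"
    then have "(s', s) \<in> (G - Id)\<^sup>*" unfolding K_def rtrancl_r_diff_Id by simp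
    moreover have "(s, s') \<in> G - Id" using G by auto
    ultimately have "(s, s) \<in> (G - Id)\<^sup>+" by (rule rtrancl_into_trancl2[rotated])
    then show False using A2_acyclic unfolding acyclic_def by blast
  qed
  have s'K: "s' \<in> K" unfolding K_def by simp
  have I: "indep_var (PiM K (\<lambda>_. borel)) (\<lambda>\<omega>. restrict (\<lambda>x. P \<omega> x) K)
                     (PiM {s} (\<lambda>_. borel)) (\<lambda>\<omega>. restrict (\<lambda>x. P \<omega> x) {s})"
    using A1 sK by (intro indep_var_restrict) auto
  define g where "g f = F (Qfun r \<gamma> pol (extK K f) s' a')" for f
  have gm: "g \<in> borel_measurable (PiM K (\<lambda>_. (borel :: ('a \<Rightarrow> 's \<Rightarrow> real) measure)))"
    unfolding g_def
  proof (rule measurable_compose[OF Q_meas F])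
    fix x b y
    show "(\<lambda>f. extK K f x b y) \<in> borel_measurable (PiM K (\<lambda>_. (borel :: ('a \<Rightarrow> 's \<Rightarrow> real) measure)))"
      by (cases "x \<in> K") (auto simp: extK_def intro: eval_meas)
  qed
  have hm: "(\<lambda>f. f s a s') \<in> borel_measurable (PiM {s} (\<lambda>_. (borel :: ('a \<Rightarrow> 's \<Rightarrow> real) measure)))"
    by (rule eval_meas) simp
  have I2: "indep_var borel (g \<circ> (\<lambda>\<omega>. restrict (\<lambda>x. P \<omega> x) K)) borel ((\<lambda>f. f s a s') \<circ> (\<lambda>\<omega>. restrict (\<lambda>x. P \<omega> x) {s}))"
    by (rule indep_var_compose[OF I gm hm])
  have e2: "((\<lambda>f. f s a s') \<circ> (\<lambda>\<omega>. restrict (\<lambda>x. P \<omega> x) {s})) = (\<lambda>\<omega>. P \<omega> s a s')"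
    by (auto simp: fun_eq_iff)
  show ?thesis
  proof (rule that)
    show "indep_var borel (g \<circ> (\<lambda>\<omega>. restrict (\<lambda>x. P \<omega> x) K)) borel (\<lambda>\<omega>. P \<omega> s a s')"
      using I2 unfolding e2 .
  next
    fix \<omega> assume w: "\<omega> \<in> space M"
    have "Qfun r \<gamma> pol (P \<omega>) s' a' = Qfun r \<gamma> pol (extK K (restrict (\<lambda>x. P \<omega> x) K)) s' a'"
    proof (rule Qfun_local[where K=K])
      show "s' \<in> K" by (rule s'K)
      fix y c x assume y: "y \<in> K"
      then show "P \<omega> y c x = extK K (restrict (\<lambda>x. P \<omega> x) K) y c x" by (simp add: extK_def)
      assume "P \<omega> y c x \<noteq> 0"
      moreover have "0 \<le> P \<omega> y c x" using trans[rule_format, OF w] by (simp add: is_transition_def)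
      ultimately have "(y, x) \<in> G" using A2_graph[rule_format, OF w, of y c x] by simp
      then show "x \<in> K" using y unfolding K_def by (simp add: rtrancl_into_rtrancl)
    qed
    then show "(g \<circ> (\<lambda>\<omega>. restrict (\<lambda>x. P \<omega> x) K)) \<omega> = F (Qfun r \<gamma> pol (P \<omega>) s' a')"
      by (simp add: g_def)
  qed
qed

theorem theorem4:
  fixes M :: "'w measure"
    and P :: "'w \<Rightarrow> ('s::finite \<Rightarrow> 'a::finite \<Rightarrow> 's \<Rightarrow> real)"
    and r :: "'s \<Rightarrow> 'a \<Rightarrow> real"
    and \<gamma> :: real
    and pol :: "'s \<Rightarrow> 'a \<Rightarrow> real"
    and G :: "('s \<times> 's) set"
    and s :: 's and a :: 'a
  assumes posterior: "prob_space M"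
    and gamma: "0 \<le> \<gamma>" "\<gamma> < 1"
    and policy: "is_policy pol"
    and trans: "\<And>\<omega>. \<omega> \<in> space M \<Longrightarrow> is_transition (P \<omega>)"
    and meas: "\<And>x b y. (\<lambda>\<omega>. P \<omega> x b y) \<in> borel_measurable M"
    and A1: "prob_space.indep_vars M (\<lambda>_. borel) (\<lambda>x \<omega>. P \<omega> x) UNIV"
    and A2_graph: "\<And>\<omega> x b y. \<omega> \<in> space M \<Longrightarrow> 0 < P \<omega> x b y \<Longrightarrow> (x, y) \<in> G"
    and A2_acyclic: "acyclic (G - Id)"
    and A2_terminal: "\<And>\<omega> x b. \<omega> \<in> space M \<Longrightarrow> (x, x) \<in> G \<Longrightarrow> P \<omega> x b x = 1"
  shows
    "(let pbar = (\<lambda>x b y. pmean M (\<lambda>\<omega>. P \<omega> x b y));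
          Qbar = (\<lambda>x b. pmean M (\<lambda>\<omega>. Qfun r \<gamma> pol (P \<omega>) x b));
          U = (\<lambda>x b. pvar M (\<lambda>\<omega>. Qfun r \<gamma> pol (P \<omega>) x b));
          u = (\<lambda>x b. Vstep pol pbar Qbar x b
                      - pmean M (\<lambda>\<omega>. Vstep pol (P \<omega>) (Qfun r \<gamma> pol (P \<omega>)) x b))
      in U s a = \<gamma>\<^sup>2 * u s a
                 + \<gamma>\<^sup>2 * (\<Sum>a'\<in>UNIV. \<Sum>s'\<in>UNIV. pol s' a' * pbar s a s' * U s' a'))"
proof -
  interpret prob_space M by (rule posterior)
  define Q where "Q = (\<lambda>\<omega> x b. Qfun r \<gamma> pol (P \<omega>) x b)"
  define B where "B = Rb r / (1 - \<gamma>)"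
  have Qm: "(\<lambda>\<omega>. Q \<omega> x b) \<in> borel_measurable M" for x b
    unfolding Q_def by (rule Q_meas) (rule meas)
  have Qb: "\<bar>Q \<omega> x b\<bar> \<le> B" if "\<omega> \<in> space M" for \<omega> x b
    unfolding Q_def B_def using Qfun_bound trans[OF that] policy gamma by blast
  have B0: "0 \<le> B" using Qb[of _ s a] abs_ge_zero order_trans
    by (metis prob_space.not_empty posterior subsetI subset_empty)
  have Pnn: "0 \<le> P \<omega> x b y" if "\<omega> \<in> space M" for \<omega> x b y
    using trans[OF that] by (simp add: is_transition_def)
  have Psum: "(\<Sum>y\<in>UNIV. P \<omega> x b y) = 1" if "\<omega> \<in> space M" for \<omega> x b
    using trans[OF that] by (simp add: is_transition_def)
  have Ple: "P \<omega> x b y \<le> 1" if w: "\<omega> \<in> space M" for \<omega> x b y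
  proof -
    have "P \<omega> x b y \<le> (\<Sum>y\<in>UNIV. P \<omega> x b y)"
      by (rule member_le_sum) (auto intro: Pnn[OF w])
    then show ?thesis using Psum[OF w] by simp
  qed
  have Pabs: "\<bar>P \<omega> x b y\<bar> \<le> 1" if w: "\<omega> \<in> space M" for \<omega> x b y
    using Pnn[OF w] Ple[OF w] by simp
  have intb: "integrable M f" if "f \<in> borel_measurable M" "\<And>\<omega>. \<omega> \<in> space M \<Longrightarrow> \<bar>f \<omega>\<bar> \<le> C" for f :: "'w \<Rightarrow> real" and C
    by (rule integrable_const_bound[where B=C]) (use that in auto)
  have mulb: "\<bar>u * v\<bar> \<le> C" if "\<bar>u\<bar> \<le> 1" "\<bar>v\<bar> \<le> C" for u v C :: real
  proof -
    have "\<bar>u * v\<bar> = \<bar>u\<bar> * \<bar>v\<bar>" by (simp add: abs_mult)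
    also have "\<dots> \<le> 1 * \<bar>v\<bar>" by (rule mult_right_mono) (use that in auto)
    finally show ?thesis using that by simp
  qed
  have Q2b: "\<bar>(Q \<omega> x b)\<^sup>2\<bar> \<le> B\<^sup>2" if "\<omega> \<in> space M" for \<omega> x b
    using power_mono[OF Qb[OF that, of x b] abs_ge_zero, of 2] by simp
  have iQ: "integrable M (\<lambda>\<omega>. Q \<omega> x b)" for x b
    by (rule intb[OF Qm Qb])
  have iQ2: "integrable M (\<lambda>\<omega>. (Q \<omega> x b)\<^sup>2)" for x b
    by (rule intb[OF _ Q2b]) (use Qm in simp)
  have iPQ: "integrable M (\<lambda>\<omega>. P \<omega> s a s' * Q \<omega> s' a')" for s' a'
    by (rule intb[of _ B]) (use Qm meas mulb Pabs Qb in auto)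
  have iPQ2: "integrable M (\<lambda>\<omega>. P \<omega> s a s' * (Q \<omega> s' a')\<^sup>2)" for s' a'
    by (rule intb[of _ "B\<^sup>2"]) (use Qm meas mulb Pabs Q2b in auto)
  have iP: "integrable M (\<lambda>\<omega>. P \<omega> x b y)" for x b y
    by (rule intb[OF meas Pabs])
  have isum2: "pmean M (\<lambda>\<omega>. \<Sum>s'\<in>UNIV. \<Sum>a'\<in>UNIV. f s' a' \<omega>) = (\<Sum>s'\<in>UNIV. \<Sum>a'\<in>UNIV. pmean M (f s' a'))"
    if "\<And>s' a'. integrable M (f s' a')" for f :: "'s \<Rightarrow> 'a \<Rightarrow> 'w \<Rightarrow> real"
    unfolding pmean_def using that by (simp add: integral_sum integrable_sum)
  define pb where "pb s' = pmean M (\<lambda>\<omega>. P \<omega> s a s')" for s'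
  define Qbar where "Qbar s' a' = pmean M (\<lambda>\<omega>. Q \<omega> s' a')" for s' a'
  define EQ2 where "EQ2 s' a' = pmean M (\<lambda>\<omega>. (Q \<omega> s' a')\<^sup>2)" for s' a'
  have key: "pmean M (\<lambda>\<omega>. P \<omega> s a s' * F (Q \<omega> s' a')) = pb s' * pmean M (\<lambda>\<omega>. F (Q \<omega> s' a'))"
    if F: "F \<in> borel_measurable borel" and iF: "integrable M (\<lambda>\<omega>. F (Q \<omega> s' a'))" for s' a' F
  proof (cases "(s, s') \<in> G")
    case False
    have z: "P \<omega> s a s' = 0" if "\<omega> \<in> space M" for \<omega>
      using Pnn[OF that, of s a s'] A2_graph[OF that, of s a s'] False by force
    have "pmean M (\<lambda>\<omega>. P \<omega> s a s' * F (Q \<omega> s' a')) = pmean M (\<lambda>\<omega>. 0)"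
      unfolding pmean_def by (intro Bochner_Integration.integral_cong) (auto simp: z)
    moreover have "pb s' = pmean M (\<lambda>\<omega>. 0)"
      unfolding pmean_def pb_def by (intro Bochner_Integration.integral_cong) (auto simp: z)
    ultimately show ?thesis by (simp add: pmean_def)
  next
    case True
    show ?thesis
    proof (cases "s = s'")
      case True
      have z: "P \<omega> s a s' = 1" if "\<omega> \<in> space M" for \<omega>
        using A2_terminal[OF that, of s a] True \<open>(s, s') \<in> G\<close> by simp
      have "pmean M (\<lambda>\<omega>. P \<omega> s a s' * F (Q \<omega> s' a')) = pmean M (\<lambda>\<omega>. F (Q \<omega> s' a'))"
        unfolding pmean_def by (intro Bochner_Integration.integral_cong) (auto simp: z)
      moreover have "pb s' = pmean M (\<lambda>\<omega>. 1)"
        unfolding pmean_def pb_def by (intro Bochner_Integration.integral_cong) (auto simp: z)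
      ultimately show ?thesis by (simp add: pmean_def prob_space)
    next
      case False
      obtain Z where Zi: "indep_var borel Z borel (\<lambda>\<omega>. P \<omega> s a s')"
        and Ze: "\<And>\<omega>. \<omega> \<in> space M \<Longrightarrow> Z \<omega> = F (Qfun r \<gamma> pol (P \<omega>) s' a')"
        using indep_case[OF posterior _ A1 _ A2_acyclic \<open>(s, s') \<in> G\<close> False F] trans A2_graph by blast
      have Ze': "Z \<omega> = F (Q \<omega> s' a')" if "\<omega> \<in> space M" for \<omega>
        using Ze[OF that] by (simp add: Q_def)
      have "integrable M Z \<longleftrightarrow> integrable M (\<lambda>\<omega>. F (Q \<omega> s' a'))"
        by (rule Bochner_Integration.integrable_cong) (auto simp: Ze')
      with iF have iZ: "integrable M Z" by simp
      have "pmean M (\<lambda>\<omega>. P \<omega> s a s' * F (Q \<omega> s' a')) = (\<integral>\<omega>. Z \<omega> * P \<omega> s a s' \<partial>M)"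
        unfolding pmean_def by (intro Bochner_Integration.integral_cong) (auto simp: Ze')
      also have "\<dots> = (\<integral>\<omega>. Z \<omega> \<partial>M) * pb s'"
        unfolding pb_def pmean_def by (rule indep_var_lebesgue_integral[OF Zi iZ iP])
      also have "(\<integral>\<omega>. Z \<omega> \<partial>M) = pmean M (\<lambda>\<omega>. F (Q \<omega> s' a'))"
        unfolding pmean_def by (intro Bochner_Integration.integral_cong) (auto simp: Ze')
      finally show ?thesis by simp
    qed
  qed
  have key1: "pmean M (\<lambda>\<omega>. P \<omega> s a s' * Q \<omega> s' a') = pb s' * Qbar s' a'" for s' a'
    using key[of "\<lambda>x. x" s' a'] iQ unfolding Qbar_def by simp
  have key2: "pmean M (\<lambda>\<omega>. P \<omega> s a s' * (Q \<omega> s' a')\<^sup>2) = pb s' * EQ2 s' a'" for s' a'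
    using key[of "\<lambda>x. x\<^sup>2" s' a'] iQ2 unfolding EQ2_def by simp
  have polsum: "(\<Sum>a'\<in>UNIV. pol x a') = 1" for x
    using policy by (simp add: is_policy_def)
  define X where "X \<omega> = (\<Sum>s'\<in>UNIV. \<Sum>a'\<in>UNIV. pol s' a' * (P \<omega> s a s' * Q \<omega> s' a'))" for \<omega>
  have Bell: "Q \<omega> s a = r s a + \<gamma> * X \<omega>" if "\<omega> \<in> space M" for \<omega>
  proof -
    have "Q \<omega> s a = r s a + \<gamma> * (\<Sum>s'\<in>UNIV. \<Sum>a'\<in>UNIV. P \<omega> s a s' * pol s' a' * Q \<omega> s' a')"
      unfolding Q_def by (rule Bellman[OF trans[OF that] policy gamma])
    then show ?thesis by (simp add: X_def mult_ac)
  qed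
  have Xm: "X \<in> borel_measurable M"
    unfolding X_def by (intro borel_measurable_sum borel_measurable_times borel_measurable_const meas Qm)
  define CX where "CX = (\<Sum>s'\<in>UNIV. \<Sum>a'\<in>UNIV. \<bar>pol s' a'\<bar> * B)"
  have Xb: "\<bar>X \<omega>\<bar> \<le> CX" if w: "\<omega> \<in> space M" for \<omega>
  proof -
    have "\<bar>X \<omega>\<bar> \<le> (\<Sum>s'\<in>UNIV. \<bar>\<Sum>a'\<in>UNIV. pol s' a' * (P \<omega> s a s' * Q \<omega> s' a')\<bar>)"
      unfolding X_def by (rule sum_abs)
    also have "\<dots> \<le> (\<Sum>s'\<in>UNIV. \<Sum>a'\<in>UNIV. \<bar>pol s' a' * (P \<omega> s a s' * Q \<omega> s' a')\<bar>)"
      by (intro sum_mono sum_abs)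
    also have "\<dots> \<le> CX"
      unfolding CX_def abs_mult[of "pol _ _"]
      by (intro sum_mono mult_left_mono mulb Pabs[OF w] Qb[OF w] abs_ge_zero)
    finally show ?thesis .
  qed
  have iX: "integrable M X" by (rule intb[OF Xm Xb])
  have X2b: "\<bar>(X \<omega>)\<^sup>2\<bar> \<le> CX\<^sup>2" if "\<omega> \<in> space M" for \<omega>
    using power_mono[OF Xb[OF that] abs_ge_zero, of 2] by simp
  have iX2: "integrable M (\<lambda>\<omega>. (X \<omega>)\<^sup>2)"
    by (rule intb[OF _ X2b]) (use Xm in simp)
  have pmean_cmult: "pmean M (\<lambda>\<omega>. c * f \<omega>) = c * pmean M f" for c f
    unfolding pmean_def by simp
  define m where "m = pmean M X"
  have EX: "m = (\<Sum>s'\<in>UNIV. \<Sum>a'\<in>UNIV. pb s' * pol s' a' * Qbar s' a')"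
  proof -
    have "m = (\<Sum>s'\<in>UNIV. \<Sum>a'\<in>UNIV. pmean M (\<lambda>\<omega>. pol s' a' * (P \<omega> s a s' * Q \<omega> s' a')))"
      unfolding m_def X_def
      by (rule isum2[of "\<lambda>s' a' \<omega>. pol s' a' * (P \<omega> s a s' * Q \<omega> s' a')"]) (intro integrable_mult_right iPQ)
    then show ?thesis by (simp only: pmean_cmult key1) (simp add: mult_ac)
  qed
  have pbsum: "(\<Sum>s'\<in>UNIV. pb s') = 1"
  proof -
    have "(\<Sum>s'\<in>UNIV. pb s') = pmean M (\<lambda>\<omega>. \<Sum>s'\<in>UNIV. P \<omega> s a s')"
      unfolding pb_def pmean_def using Bochner_Integration.integral_sum[where I=UNIV and f="\<lambda>s' \<omega>. P \<omega> s a s'" and M=M] iP by simp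
    also have "\<dots> = pmean M (\<lambda>\<omega>. 1)"
      unfolding pmean_def by (intro Bochner_Integration.integral_cong) (auto simp: Psum)
    finally show ?thesis by (simp add: pmean_def prob_space)
  qed
  have wsum: "(\<Sum>s'\<in>UNIV. \<Sum>a'\<in>UNIV. pmean M (\<lambda>\<omega>. P \<omega> s a s') * pol s' a') = 1"
    using pbsum unfolding pb_def by (simp add: sum_distrib_left[symmetric] polsum)
  define S1 where "S1 = (\<Sum>s'\<in>UNIV. \<Sum>a'\<in>UNIV. pb s' * pol s' a' * (Qbar s' a')\<^sup>2)"
  define S2 where "S2 = (\<Sum>s'\<in>UNIV. \<Sum>a'\<in>UNIV. pb s' * pol s' a' * EQ2 s' a')"
  define EX2 where "EX2 = pmean M (\<lambda>\<omega>. (X \<omega>)\<^sup>2)"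
  have F1: "Vstep pol (\<lambda>x b y. pmean M (\<lambda>\<omega>. P \<omega> x b y)) (\<lambda>x b. pmean M (\<lambda>\<omega>. Q \<omega> x b)) s a = S1 - m\<^sup>2"
    by (subst Vstep_alt) (use wsum in \<open>simp_all add: S1_def EX pb_def Qbar_def\<close>)
  have V: "Vstep pol (P \<omega>) (Q \<omega>) s a = (\<Sum>s'\<in>UNIV. \<Sum>a'\<in>UNIV. pol s' a' * (P \<omega> s a s' * (Q \<omega> s' a')\<^sup>2)) - (X \<omega>)\<^sup>2"
    if w: "\<omega> \<in> space M" for \<omega>
  proof -
    have "(\<Sum>s'\<in>UNIV. \<Sum>a'\<in>UNIV. P \<omega> s a s' * pol s' a') = 1"
      by (simp add: sum_distrib_left[symmetric] polsum Psum[OF w])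
    then show ?thesis
      by (subst Vstep_alt) (simp_all add: X_def mult_ac)
  qed
  have F2: "pmean M (\<lambda>\<omega>. Vstep pol (P \<omega>) (Q \<omega>) s a) = S2 - EX2"
  proof -
    have i1: "integrable M (\<lambda>\<omega>. \<Sum>s'\<in>UNIV. \<Sum>a'\<in>UNIV. pol s' a' * (P \<omega> s a s' * (Q \<omega> s' a')\<^sup>2))"
      by (intro Bochner_Integration.integrable_sum integrable_mult_right iPQ2)
    have "pmean M (\<lambda>\<omega>. Vstep pol (P \<omega>) (Q \<omega>) s a)
        = pmean M (\<lambda>\<omega>. (\<Sum>s'\<in>UNIV. \<Sum>a'\<in>UNIV. pol s' a' * (P \<omega> s a s' * (Q \<omega> s' a')\<^sup>2)) - (X \<omega>)\<^sup>2)"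
      unfolding pmean_def by (intro Bochner_Integration.integral_cong) (auto simp: V)
    also have "\<dots> = pmean M (\<lambda>\<omega>. \<Sum>s'\<in>UNIV. \<Sum>a'\<in>UNIV. pol s' a' * (P \<omega> s a s' * (Q \<omega> s' a')\<^sup>2)) - EX2"
      unfolding pmean_def EX2_def by (rule Bochner_Integration.integral_diff[OF i1 iX2])
    also have "pmean M (\<lambda>\<omega>. \<Sum>s'\<in>UNIV. \<Sum>a'\<in>UNIV. pol s' a' * (P \<omega> s a s' * (Q \<omega> s' a')\<^sup>2))
        = (\<Sum>s'\<in>UNIV. \<Sum>a'\<in>UNIV. pmean M (\<lambda>\<omega>. pol s' a' * (P \<omega> s a s' * (Q \<omega> s' a')\<^sup>2)))"
      by (rule isum2[of "\<lambda>s' a' \<omega>. pol s' a' * (P \<omega> s a s' * (Q \<omega> s' a')\<^sup>2)"]) (intro integrable_mult_right iPQ2)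
    also have "\<dots> = S2"
      unfolding S2_def by (simp only: pmean_cmult key2) (simp add: mult_ac)
    finally show ?thesis .
  qed
  have F3: "(\<Sum>a'\<in>UNIV. \<Sum>s'\<in>UNIV. pol s' a' * pmean M (\<lambda>\<omega>. P \<omega> s a s') * pvar M (\<lambda>\<omega>. Q \<omega> s' a')) = S2 - S1"
  proof -
    have pv: "pvar M (\<lambda>\<omega>. Q \<omega> s' a') = EQ2 s' a' - (Qbar s' a')\<^sup>2" for s' a'
      unfolding EQ2_def Qbar_def by (rule pvar_alt[OF posterior iQ iQ2])
    have "(\<Sum>a'\<in>UNIV. \<Sum>s'\<in>UNIV. pol s' a' * pmean M (\<lambda>\<omega>. P \<omega> s a s') * pvar M (\<lambda>\<omega>. Q \<omega> s' a'))
       = (\<Sum>s'\<in>UNIV. \<Sum>a'\<in>UNIV. pol s' a' * pmean M (\<lambda>\<omega>. P \<omega> s a s') * pvar M (\<lambda>\<omega>. Q \<omega> s' a'))"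
      by (rule sum.swap)
    also have "\<dots> = (\<Sum>s'\<in>UNIV. \<Sum>a'\<in>UNIV. pb s' * pol s' a' * EQ2 s' a' - pb s' * pol s' a' * (Qbar s' a')\<^sup>2)"
      unfolding pv pb_def by (intro sum.cong refl) (simp add: algebra_simps)
    also have "\<dots> = S2 - S1"
      unfolding S1_def S2_def by (simp add: sum_subtractf)
    finally show ?thesis .
  qed
  have F4: "pvar M (\<lambda>\<omega>. Q \<omega> s a) = \<gamma>\<^sup>2 * (EX2 - m\<^sup>2)"
    using pvar_affine[OF posterior iX Bell] pvar_alt[OF posterior iX iX2]
    unfolding EX2_def m_def by simp
  have FINAL: "pvar M (\<lambda>\<omega>. Q \<omega> s a) =
     \<gamma>\<^sup>2 * (Vstep pol (\<lambda>x b y. pmean M (\<lambda>\<omega>. P \<omega> x b y)) (\<lambda>x b. pmean M (\<lambda>\<omega>. Q \<omega> x b)) s a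
              - pmean M (\<lambda>\<omega>. Vstep pol (P \<omega>) (Q \<omega>) s a))
     + \<gamma>\<^sup>2 * (\<Sum>a'\<in>UNIV. \<Sum>s'\<in>UNIV. pol s' a' * pmean M (\<lambda>\<omega>. P \<omega> s a s') * pvar M (\<lambda>\<omega>. Q \<omega> s' a'))"
    unfolding F1 F2 F3 F4 by (simp add: algebra_simps)
  show ?thesis using FINAL unfolding Let_def Q_def by simp
qed

end
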